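(* Let $n$ be a positive integer and let $X$ have Student's $t$-distribution with $n$ degrees of freedom, i.e. density $f(x)=\frac{\Gamma(\frac{n+1}2)}{\sqrt{n\pi}\,\Gamma(\frac n2)(1+\frac{x^2}n)^{(n+1)/2}}$ on $\mathbb{R}$. Then $$\Pr\{|X|\ge x\}\le x\Big(\frac{n+1}{n+x^2}\Big)^{(n+1)/2}\quad\text{for } x\ge1,\qquad \Pr\{|X|\le x\}\le x\Big(\frac{n+1}{n+x^2}\Big)^{(n+1)/2}\quad\text{for } 0\le x\le1,$$ and the function $x\mapsto x\big(\frac{n+1}{n+x^2}\big)^{(n+1)/2}$ is monotonically increasing on $(0,1)$ and monotonically decreasing on $(1,\infty)$. *)

theory Defs
  imports "HOL-Probability.Probability"
begin

definition student_t_density :: "nat \<Rightarrow> real \<Rightarrow> real" where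
  "student_t_density n x =
     Gamma ((real n + 1) / 2) /
     (sqrt (real n * pi) * Gamma (real n / 2) * (1 + x\<^sup>2 / real n) powr ((real n + 1) / 2))"

definition t_bound :: "nat \<Rightarrow> real \<Rightarrow> real" where
  "t_bound n x = x * ((real n + 1) / (real n + x\<^sup>2)) powr ((real n + 1) / 2)"

end

theory Submission imports Defs begin

lemma tdens_eq:
  assumes "n > 0"
  shows "student_t_density n t = student_t_density n 1 * ((real n + 1) / (real n + t\<^sup>2)) powr ((real n + 1) / 2)"
proof -
  have n: "real n > 0" using assms by simp
  have e1: "1 + t\<^sup>2 / real n = (real n + t\<^sup>2) / real n" using n by (simp add: field_simps)
  have e2: "1 + 1\<^sup>2 / real n = (real n + 1) / real n" using n by (simp add: field_simps)
  have p0: "real n + t\<^sup>2 > 0" using n by (simp add: add_pos_nonneg)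
  have p1: "(real n + t\<^sup>2) powr ((real n + 1) / 2) > 0" using p0 by simp
  have p2: "(real n + 1) powr ((real n + 1) / 2) > 0" using n by simp
  have p3: "real n powr ((real n + 1) / 2) > 0" using n by simp
  have g1: "Gamma ((real n + 1) / 2) > 0" by (rule Gamma_real_pos) (use n in simp)
  have g2: "Gamma (real n / 2) > 0" by (rule Gamma_real_pos) (use n in simp)
  have s: "sqrt (real n * pi) > 0" using n by simp
  show ?thesis
    unfolding student_t_density_def e1 e2 powr_divide
    using p1 p2 p3 g1 g2 s by (simp add: field_simps)
qed

lemma tdens_pos: "n > 0 \<Longrightarrow> student_t_density n t > 0"
proof -
  assume "n > 0"
  then have n: "real n > 0" by simp
  have g1: "Gamma ((real n + 1) / 2) > 0" by (rule Gamma_real_pos) (use n in simp)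
  have g2: "Gamma (real n / 2) > 0" by (rule Gamma_real_pos) (use n in simp)
  have "1 + t\<^sup>2 / real n > 0" using n by (simp add: add_pos_nonneg)
  then show ?thesis unfolding student_t_density_def using g1 g2 n by simp
qed

lemma alg: fixes n t P :: real assumes pos: "n + t\<^sup>2 > 0" and n: "n > 0"
  shows "1 * P + (n + 1) / 2 * (P / ((n + 1) / (n + t\<^sup>2))) * (- (n + 1) * (2 * t) / (n + t\<^sup>2)\<^sup>2) * t = P * (n * (1 - t\<^sup>2) / (n + t\<^sup>2))"
proof -
  define N where "N = n + t\<^sup>2"
  have N: "N > 0" "N \<noteq> 0" using pos N_def by auto
  have a: "(n + 1) / 2 * (P / ((n + 1) / N)) = P * N / 2" using n by (simp add: field_simps)
  have b: "P * N / 2 * (- (n + 1) * (2 * t) / N\<^sup>2) = - P * (n+1) * t / N"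
    using N by (simp add: power2_eq_square field_simps)
  have "1 * P + (n + 1) / 2 * (P / ((n + 1) / N)) * (- (n + 1) * (2 * t) / N\<^sup>2) * t = P - P * (n+1) * t\<^sup>2 / N"
    unfolding a b by (simp add: power2_eq_square)
  also have "\<dots> = P * (n * (1 - t\<^sup>2) / N)" using N by (simp add: field_simps N_def)
  finally show ?thesis unfolding N_def .
qed
lemma tbound_deriv:
  assumes "n > 0"
  shows "DERIV (t_bound n) t :> ((real n + 1) / (real n + t\<^sup>2)) powr ((real n + 1) / 2) * (real n * (1 - t\<^sup>2) / (real n + t\<^sup>2))"
proof -
  have n: "real n > 0" using assms by simp
  let ?a = "(real n + 1) / 2"
  let ?r = "\<lambda>t. (real n + 1) / (real n + t\<^sup>2)"
  have pos: "real n + t\<^sup>2 > 0" using n by (simp add: add_pos_nonneg)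
  have rpos: "?r t > 0" using pos n by simp
  have dr: "DERIV ?r t :> - (real n + 1) * (2 * t) / (real n + t\<^sup>2)\<^sup>2"
    using pos by (auto intro!: derivative_eq_intros simp: power2_eq_square field_simps)
  have dp: "DERIV (\<lambda>t. ?r t powr ?a) t :> ?a * ?r t powr (?a - of_nat 1) * (- (real n + 1) * (2 * t) / (real n + t\<^sup>2)\<^sup>2)"
    by (rule DERIV_fun_powr[OF dr rpos])
  have eq: "?r t powr (?a - of_nat 1) = ?r t powr ?a / ?r t"
    using rpos by (subst powr_diff) simp
  show ?thesis unfolding t_bound_def
    apply (rule DERIV_cong[OF DERIV_mult[OF DERIV_ident dp]])
    unfolding eq by (rule alg[OF pos n])
qed

lemma tbound_lim:
  assumes "n > 0"
  shows "(t_bound n \<longlongrightarrow> 0) at_top"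
proof -
  have n: "real n > 0" using assms by simp
  define a where "a = (real n + 1) / 2"
  define K where "K = (real n + 1) powr a"
  have lim: "((\<lambda>t::real. K / t) \<longlongrightarrow> 0) at_top"
    by (rule tendsto_divide_0[OF tendsto_const filterlim_at_top_imp_at_infinity[OF filterlim_ident]])
  have ev: "eventually (\<lambda>t. 0 \<le> t_bound n t \<and> t_bound n t \<le> K / t) at_top"
    unfolding eventually_at_top_linorder
  proof (rule exI[of _ 1], intro allI impI)
    fix t :: real assume t: "t \<ge> 1"
    have tp: "real n + t\<^sup>2 > 0" using n by (simp add: add_pos_nonneg)
    have t2: "t\<^sup>2 > 0" using t by simp
    have z: "0 \<le> t_bound n t" unfolding t_bound_def using t by simp
    have "((real n + 1) / (real n + t\<^sup>2)) powr a \<le> ((real n + 1) / t\<^sup>2) powr a"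
    proof (rule powr_mono2)
      show "0 \<le> a" unfolding a_def by simp
      show "0 \<le> (real n + 1) / (real n + t\<^sup>2)" using tp by simp
      have "0 < (real n + t\<^sup>2) * t\<^sup>2" using tp t2 by (rule mult_pos_pos)
      then show "(real n + 1) / (real n + t\<^sup>2) \<le> (real n + 1) / t\<^sup>2"
        by (rule divide_left_mono[rotated 2]) (use n in simp_all)
    qed
    also have "\<dots> = K / (t\<^sup>2) powr a" unfolding K_def by (simp add: powr_divide)
    also have "(t\<^sup>2) powr a = t powr (real n + 1)"
    proof -
      have "t\<^sup>2 = t powr 2" using t by (simp add: powr_numeral)
      then have "(t\<^sup>2) powr a = (t powr 2) powr a" by simp
      also have "\<dots> = t powr (2 * a)" by (rule powr_powr)
      also have "2 * a = real n + 1" unfolding a_def by simp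
      finally show ?thesis .
    qed
    finally have le1: "((real n + 1) / (real n + t\<^sup>2)) powr a \<le> K / t powr (real n + 1)" .
    have "t powr 2 \<le> t powr (real n + 1)" by (rule powr_mono) (use n t in auto)
    then have tt: "t\<^sup>2 \<le> t powr (real n + 1)" using t by (simp add: powr_numeral)
    have Kp: "K \<ge> 0" unfolding K_def by simp
    have "t_bound n t = t * ((real n + 1) / (real n + t\<^sup>2)) powr a" unfolding t_bound_def a_def ..
    also have "\<dots> \<le> t * (K / t powr (real n + 1))" using le1 t by (intro mult_left_mono) auto
    also have "\<dots> \<le> t * (K / t\<^sup>2)" using tt t2 Kp t by (intro mult_left_mono divide_left_mono) auto
    also have "\<dots> = K / t" using t by (simp add: power2_eq_square)
    finally show "0 \<le> t_bound n t \<and> t_bound n t \<le> K / t" using z by simp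
  qed
  show ?thesis
    by (rule tendsto_sandwich[OF _ _ tendsto_const lim]) (use ev in \<open>auto elim: eventually_mono\<close>)
qed

lemma q_mono:
  fixes s t :: real assumes "0 \<le> s" "s \<le> t" "n > 0"
  shows "real n * (s\<^sup>2 - 1) / (real n + s\<^sup>2) \<le> real n * (t\<^sup>2 - 1) / (real n + t\<^sup>2)"
proof -
  have n: "real n > 0" using assms by simp
  have st: "s\<^sup>2 \<le> t\<^sup>2" using assms by (intro power_mono) auto
  have p1: "real n + s\<^sup>2 > 0" "real n + t\<^sup>2 > 0" using n by (auto simp: add_pos_nonneg)
  have e: "real n * (u\<^sup>2 - 1) / (real n + u\<^sup>2) = real n - real n * (real n + 1) / (real n + u\<^sup>2)" for u
  proof -
    have "real n + u\<^sup>2 > 0" using n by (simp add: add_pos_nonneg)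
    then show ?thesis by (simp add: field_simps)
  qed
  have "real n * (real n + 1) / (real n + t\<^sup>2) \<le> real n * (real n + 1) / (real n + s\<^sup>2)"
    using p1 st n by (intro divide_left_mono) auto
  then show ?thesis unfolding e by simp
qed

lemma tdens_meas: "student_t_density n \<in> borel_measurable borel"
  unfolding student_t_density_def by measurable


lemma ind_int_le:
  fixes u v :: "real \<Rightarrow> real"
  assumes "\<And>t. t \<in> S \<Longrightarrow> u t \<le> v t"
  shows "(\<integral>\<^sup>+t. ennreal (u t) * indicator S t \<partial>lborel) \<le> (\<integral>\<^sup>+t. ennreal (v t) * indicator S t \<partial>lborel)"
  by (intro nn_integral_mono) (auto simp: assms ennreal_leI split: split_indicator)

lemma int_plus:
  fixes u v :: "real \<Rightarrow> real"
  assumes [measurable]: "u \<in> borel_measurable borel" "v \<in> borel_measurable borel" "S \<in> sets borel"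
    and "\<And>t. u t \<ge> 0" "\<And>t. v t \<ge> 0"
  shows "(\<integral>\<^sup>+t. ennreal (u t + v t) * indicator S t \<partial>lborel) = (\<integral>\<^sup>+t. ennreal (u t) * indicator S t \<partial>lborel) + (\<integral>\<^sup>+t. ennreal (v t) * indicator S t \<partial>lborel)"
proof -
  have "(\<integral>\<^sup>+t. ennreal (u t + v t) * indicator S t \<partial>lborel) = (\<integral>\<^sup>+t. ennreal (u t) * indicator S t + ennreal (v t) * indicator S t \<partial>lborel)"
    using assms(4,5) by (intro nn_integral_cong) (auto simp: ennreal_plus split: split_indicator)
  also have "\<dots> = (\<integral>\<^sup>+t. ennreal (u t) * indicator S t \<partial>lborel) + (\<integral>\<^sup>+t. ennreal (v t) * indicator S t \<partial>lborel)"
    by (rule nn_integral_add) auto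
  finally show ?thesis .
qed

lemma int_split:
  fixes u :: "real \<Rightarrow> real"
  assumes [measurable]: "u \<in> borel_measurable borel" "S \<in> sets borel" "T \<in> sets borel"
    and "S \<inter> T = {}"
  shows "(\<integral>\<^sup>+t. ennreal (u t) * indicator (S \<union> T) t \<partial>lborel) = (\<integral>\<^sup>+t. ennreal (u t) * indicator S t \<partial>lborel) + (\<integral>\<^sup>+t. ennreal (u t) * indicator T t \<partial>lborel)"
proof -
  have "(\<integral>\<^sup>+t. ennreal (u t) * indicator (S \<union> T) t \<partial>lborel) = (\<integral>\<^sup>+t. ennreal (u t) * indicator S t + ennreal (u t) * indicator T t \<partial>lborel)"
    using assms(4) by (intro nn_integral_cong) (auto split: split_indicator)
  also have "\<dots> = (\<integral>\<^sup>+t. ennreal (u t) * indicator S t \<partial>lborel) + (\<integral>\<^sup>+t. ennreal (u t) * indicator T t \<partial>lborel)"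
    by (rule nn_integral_add) auto
  finally show ?thesis .
qed

lemma int_union_le:
  fixes u :: "real \<Rightarrow> real"
  assumes [measurable]: "u \<in> borel_measurable borel" "S \<in> sets borel" "T \<in> sets borel"
  shows "(\<integral>\<^sup>+t. ennreal (u t) * indicator (S \<union> T) t \<partial>lborel) \<le> (\<integral>\<^sup>+t. ennreal (u t) * indicator S t \<partial>lborel) + (\<integral>\<^sup>+t. ennreal (u t) * indicator T t \<partial>lborel)"
proof -
  have "(\<integral>\<^sup>+t. ennreal (u t) * indicator (S \<union> T) t \<partial>lborel) \<le> (\<integral>\<^sup>+t. ennreal (u t) * indicator S t + ennreal (u t) * indicator T t \<partial>lborel)"
    by (intro nn_integral_mono) (auto split: split_indicator)
  also have "\<dots> = (\<integral>\<^sup>+t. ennreal (u t) * indicator S t \<partial>lborel) + (\<integral>\<^sup>+t. ennreal (u t) * indicator T t \<partial>lborel)"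
    by (rule nn_integral_add) auto
  finally show ?thesis .
qed

theorem corollary9:
  fixes M :: "'a measure" and X :: "'a \<Rightarrow> real" and n :: nat
  assumes "prob_space M"
    and "n > 0"
    and "distributed M lborel X (\<lambda>x. ennreal (student_t_density n x))"
  shows "(\<forall>x::real. x \<ge> 1 \<longrightarrow>
            measure M {\<omega> \<in> space M. \<bar>X \<omega>\<bar> \<ge> x} \<le> t_bound n x)
       \<and> (\<forall>x::real. 0 \<le> x \<and> x \<le> 1 \<longrightarrow>
            measure M {\<omega> \<in> space M. \<bar>X \<omega>\<bar> \<le> x} \<le> t_bound n x)
       \<and> mono_on {0<..<1} (t_bound n)
       \<and> antimono_on {1<..} (t_bound n)"
proof -
  interpret P: prob_space M by (rule assms(1))
  have n: "real n > 0" using assms(2) by simp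
  define f where "f = student_t_density n"
  define c where "c = f 1"
  define K where "K t = ((real n + 1) / (real n + t\<^sup>2)) powr ((real n + 1) / 2)" for t
  define q where "q t = real n * (t\<^sup>2 - 1) / (real n + t\<^sup>2)" for t :: real
  define D where "D t = K t * (real n * (1 - t\<^sup>2) / (real n + t\<^sup>2))" for t
  have fK: "f t = c * K t" for t
    unfolding f_def c_def K_def by (rule tdens_eq[OF assms(2)])
  have fpos: "f t > 0" for t unfolding f_def using tdens_pos[OF assms(2)] by simp
  have fnn: "f t \<ge> 0" for t using fpos[of t] by simp
  have cpos: "c > 0" unfolding c_def by (rule fpos)
  have Knn: "K t \<ge> 0" for t unfolding K_def by simp
  have Dq: "- D t = K t * q t" for t
  proof -
    have "real n + t\<^sup>2 > 0" using n by (simp add: add_pos_nonneg)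
    then show ?thesis unfolding D_def q_def by (simp add: field_simps)
  qed
  have Dq2: "D t = K t * (- q t)" for t
  proof -
    have "real n + t\<^sup>2 > 0" using n by (simp add: add_pos_nonneg)
    then show ?thesis unfolding D_def q_def by (simp add: field_simps)
  qed
  have dg: "DERIV (t_bound n) t :> D t" for t
    unfolding D_def K_def by (rule tbound_deriv[OF assms(2)])
  have feven: "f (- t) = f t" for t unfolding f_def student_t_density_def by simp
  have fmeas[measurable]: "f \<in> borel_measurable borel" unfolding f_def by (rule tdens_meas)
  have Dmeas[measurable]: "D \<in> borel_measurable borel" unfolding D_def K_def by measurable
  have mDmeas[measurable]: "(\<lambda>t. - D t) \<in> borel_measurable borel" by measurable
  have ffmeas[measurable]: "(\<lambda>t. f t + f t) \<in> borel_measurable borel" by measurable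
  have g1: "t_bound n 1 = 1" unfolding t_bound_def by simp
  have g0: "t_bound n 0 = 0" unfolding t_bound_def by simp
  have gnn: "t_bound n x \<ge> 0" if "x \<ge> 0" for x unfolding t_bound_def using that by simp
  define I where "I S = (\<integral>\<^sup>+t. ennreal (f t) * indicator S t \<partial>lborel)" for S
  have I2: "(\<integral>\<^sup>+t. ennreal (f t + f t) * indicator S t \<partial>lborel) = I S + I S" if [measurable]: "S \<in> sets borel" for S
    unfolding I_def by (rule int_plus) (auto simp: fnn)
  have emeas: "emeasure M (X -` S \<inter> space M) = I S" if "S \<in> sets borel" for S
    unfolding I_def f_def using distributed_emeasure[OF assms(3), of S] that by simp
  have total: "I UNIV = 1"
  proof -
    have "I UNIV = emeasure M (X -` UNIV \<inter> space M)" by (rule emeas[symmetric]) simp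
    also have "\<dots> = 1" by (simp add: P.emeasure_space_1)
    finally show ?thesis .
  qed
  have reflect: "I S = I (uminus ` S)" if [measurable]: "S \<in> sets borel" for S
  proof -
    have "I S = ennreal \<bar>-1\<bar> * (\<integral>\<^sup>+t. ennreal (f (0 + -1 * t)) * indicator S (0 + -1 * t) \<partial>lborel)"
      unfolding I_def by (rule nn_integral_real_affine) auto
    also have "\<dots> = (\<integral>\<^sup>+t. ennreal (f (0 + -1 * t)) * indicator S (0 + -1 * t) \<partial>lborel)" by simp
    also have "\<dots> = I (uminus ` S)" unfolding I_def
    proof (intro nn_integral_cong)
      fix t :: real
      have "(- t \<in> S) = (t \<in> uminus ` S)" by force
      then show "ennreal (f (0 + -1 * t)) * indicator S (0 + -1 * t) = ennreal (f t) * indicator (uminus ` S) t"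
        by (simp add: feven indicator_def)
    qed
    finally show ?thesis .
  qed
  have refl1: "I {..-y} = I {y..}" for y
  proof -
    have "uminus ` {..-y} = {y..}" by (auto simp: image_iff intro: exI[of _ "- _"])
    then show ?thesis using reflect[of "{..-y}"] by simp
  qed
  have refl2: "I {-y..0} = I {0..y}" for y
  proof -
    have "uminus ` {-y..0} = {0..y}" by (auto simp: image_iff intro: exI[of _ "- _"])
    then show ?thesis using reflect[of "{-y..0}"] by simp
  qed
  define J where "J S = (\<integral>\<^sup>+t. ennreal (- D t) * indicator S t \<partial>lborel)" for S
  define J' where "J' S = (\<integral>\<^sup>+t. ennreal (D t) * indicator S t \<partial>lborel)" for S
  have qmono: "0 \<le> s \<Longrightarrow> s \<le> t \<Longrightarrow> q s \<le> q t" for s t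
    unfolding q_def by (rule q_mono[OF _ _ assms(2)])
  have q1: "q t \<ge> 0" if "t \<ge> 1" for t using qmono[of 1 t] that by (simp add: q_def)
  have q1': "q t \<le> 0" if "0 \<le> t" "t \<le> 1" for t using qmono[of t 1] that by (simp add: q_def)
  have FTC1: "J {y..} = ennreal (t_bound n y)" if "y \<ge> 1" for y
  proof -
    have "J {y..} = ennreal (0 - (- t_bound n y))" unfolding J_def
    proof (rule nn_integral_FTC_atLeast)
      show "\<And>x. y \<le> x \<Longrightarrow> ((\<lambda>t. - t_bound n t) has_real_derivative - D x) (at x)"
        using dg by (intro derivative_intros) auto
      show "\<And>x. y \<le> x \<Longrightarrow> 0 \<le> - D x" using that Dq Knn q1 by (metis order_trans mult_nonneg_nonneg)
      show "((\<lambda>t. - t_bound n t) \<longlongrightarrow> 0) at_top"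
        using tendsto_minus[OF tbound_lim[OF assms(2)]] by simp
    qed measurable
    then show ?thesis by simp
  qed
  have FTC2: "J' {0..y} = ennreal (t_bound n y)" if "0 \<le> y" "y \<le> 1" for y
  proof -
    have "J' {0..y} = ennreal (t_bound n y - t_bound n 0)" unfolding J'_def
    proof (rule nn_integral_FTC_Icc)
      show "\<And>x. x \<in> {0..y} \<Longrightarrow> (t_bound n has_real_derivative D x) (at x)" using dg by auto
      show "\<And>x. x \<in> {0..y} \<Longrightarrow> 0 \<le> D x" using that Dq2 Knn q1'
        by (metis atLeastAtMost_iff order_trans mult_nonneg_nonneg neg_0_le_iff_le)
    qed (use that in auto)
    then show ?thesis using g0 by simp
  qed
  have part1: "measure M {\<omega> \<in> space M. \<bar>X \<omega>\<bar> \<ge> x} \<le> t_bound n x" if x: "x \<ge> 1" for x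
  proof -
    have "{\<omega> \<in> space M. x \<le> \<bar>X \<omega>\<bar>} = X -` ({..-x} \<union> {x..}) \<inter> space M" by auto
    then have "emeasure M {\<omega> \<in> space M. x \<le> \<bar>X \<omega>\<bar>} = I ({..-x} \<union> {x..})"
      using emeas[of "{..-x} \<union> {x..}"] by simp
    also have "\<dots> \<le> I {..-x} + I {x..}" unfolding I_def by (rule int_union_le) auto
    also have "\<dots> = I {x..} + I {x..}" using refl1 by simp
    also have "\<dots> \<le> J {x..}"
    proof (cases "q x \<ge> 2 * c")
      case True
      have "I {x..} + I {x..} = (\<integral>\<^sup>+t. ennreal (f t + f t) * indicator {x..} t \<partial>lborel)"
        by (rule I2[symmetric]) simp
      also have "\<dots> \<le> J {x..}" unfolding J_def
      proof (rule ind_int_le)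
        fix t assume "t \<in> {x..}"
        then have "q t \<ge> 2 * c" using True qmono[of x t] x by auto
        then have "K t * (2 * c) \<le> K t * q t" using Knn by (intro mult_left_mono) auto
        then show "f t + f t \<le> - D t" using fK Dq by (simp add: algebra_simps)
      qed
      finally show ?thesis .
    next
      case False
      define A where "A = I {1..<x} + I {1..<x}"
      define B where "B = I {x..} + I {x..}"
      have sp1: "{1..} = {1..<x} \<union> {x..}" using x by auto
      have Isp: "I {1..} = I {1..<x} + I {x..}" unfolding I_def sp1 by (rule int_split) auto
      have AB: "A + B = I {1..} + I {1..}" unfolding A_def B_def Isp by (simp add: ac_simps)
      have "I {..-1} + I {1..} = (\<integral>\<^sup>+t. ennreal (f t) * indicator ({..-1} \<union> {1..}) t \<partial>lborel)"
        unfolding I_def by (rule int_split[symmetric]) auto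
      also have "\<dots> \<le> I UNIV" unfolding I_def
        by (intro nn_integral_mono) (auto split: split_indicator)
      finally have le1: "I {1..} + I {1..} \<le> 1" using refl1[of 1] total by simp
      have AB1: "A + B \<le> 1" using AB le1 by simp
      have Jsp: "J {1..} = J {1..<x} + J {x..}" unfolding J_def sp1 by (rule int_split) auto
      have J1: "J {1..} = 1" using FTC1[of 1] g1 by simp
      have JA: "J {1..<x} \<le> A"
      proof -
        have "J {1..<x} \<le> (\<integral>\<^sup>+t. ennreal (f t + f t) * indicator {1..<x} t \<partial>lborel)"
          unfolding J_def
        proof (rule ind_int_le)
          fix t assume t: "t \<in> {1..<x}"
          then have "q t \<le> 2 * c" using False qmono[of t x] by auto
          then have "K t * q t \<le> K t * (2 * c)" using Knn by (intro mult_left_mono) auto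
          then show "- D t \<le> f t + f t" using fK Dq by (simp add: algebra_simps)
        qed
        also have "\<dots> = A" unfolding A_def by (rule I2) simp
        finally show ?thesis .
      qed
      have "1 \<le> A + J {x..}" using J1 Jsp JA by (metis add_right_mono)
      then have le2: "A + B \<le> A + J {x..}" using AB1 by (rule order_trans[rotated])
      have "A \<noteq> \<infinity>"
      proof
        assume "A = \<infinity>" then have "A + B = \<infinity>" by simp
        with AB1 show False by (simp add: top_unique)
      qed
      with le2 have "B \<le> J {x..}" by (simp add: ennreal_add_left_cancel_le)
      then show ?thesis unfolding B_def .
    qed
    also have "\<dots> = ennreal (t_bound n x)" using FTC1 x by simp
    finally have "ennreal (measure M {\<omega> \<in> space M. x \<le> \<bar>X \<omega>\<bar>}) \<le> ennreal (t_bound n x)"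
      by (simp add: P.emeasure_eq_measure)
    then show "measure M {\<omega> \<in> space M. x \<le> \<bar>X \<omega>\<bar>} \<le> t_bound n x"
      using gnn[of x] x by (simp add: ennreal_le_iff)
  qed
  have part2: "measure M {\<omega> \<in> space M. \<bar>X \<omega>\<bar> \<le> x} \<le> t_bound n x" if x: "0 \<le> x" "x \<le> 1" for x
  proof -
    have "{\<omega> \<in> space M. \<bar>X \<omega>\<bar> \<le> x} = X -` ({-x..0} \<union> {0..x}) \<inter> space M" by auto
    then have "emeasure M {\<omega> \<in> space M. \<bar>X \<omega>\<bar> \<le> x} = I ({-x..0} \<union> {0..x})"
      using emeas[of "{-x..0} \<union> {0..x}"] by simp
    also have "\<dots> \<le> I {-x..0} + I {0..x}" unfolding I_def by (rule int_union_le) auto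
    also have "\<dots> = I {0..x} + I {0..x}" using refl2 by simp
    also have "\<dots> \<le> J' {0..x}"
    proof (cases "- q x \<ge> 2 * c")
      case True
      have "I {0..x} + I {0..x} = (\<integral>\<^sup>+t. ennreal (f t + f t) * indicator {0..x} t \<partial>lborel)"
        by (rule I2[symmetric]) simp
      also have "\<dots> \<le> J' {0..x}" unfolding J'_def
      proof (rule ind_int_le)
        fix t assume "t \<in> {0..x}"
        then have "- q t \<ge> 2 * c" using True qmono[of t x] x by auto
        then have "K t * (2 * c) \<le> K t * (- q t)" using Knn by (intro mult_left_mono) auto
        then show "f t + f t \<le> D t" using fK Dq2 by (simp add: algebra_simps)
      qed
      finally show ?thesis .
    next
      case False
      define A where "A = I {x<..1} + I {x<..1}"
      define B where "B = I {0..x} + I {0..x}"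
      have sp1: "{0..1} = {0..x} \<union> {x<..1}" using x by auto
      have Isp: "I {0..1} = I {0..x} + I {x<..1}" unfolding I_def sp1 by (rule int_split) auto
      have AB: "A + B = I {0..1} + I {0..1}" unfolding A_def B_def Isp by (simp add: ac_simps)
      have ae: "I {-1..0} = I {-1..<0}" unfolding I_def
      proof (rule nn_integral_cong_AE)
        show "AE t in lborel. ennreal (f t) * indicator {-1..0} t = ennreal (f t) * indicator {-1..<0} t"
          using AE_lborel_singleton[of 0] by eventually_elim (auto split: split_indicator)
      qed
      have "I {-1..<0} + I {0..1} = (\<integral>\<^sup>+t. ennreal (f t) * indicator ({-1..<0} \<union> {0..1}) t \<partial>lborel)"
        unfolding I_def by (rule int_split[symmetric]) auto
      also have "\<dots> \<le> I UNIV" unfolding I_def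
        by (intro nn_integral_mono) (auto split: split_indicator)
      finally have le1: "I {0..1} + I {0..1} \<le> 1" using refl2[of 1] ae total by simp
      have AB1: "A + B \<le> 1" using AB le1 by simp
      have Jsp: "J' {0..1} = J' {0..x} + J' {x<..1}" unfolding J'_def sp1 by (rule int_split) auto
      have J1: "J' {0..1} = 1" using FTC2[of 1] g1 by simp
      have JA: "J' {x<..1} \<le> A"
      proof -
        have "J' {x<..1} \<le> (\<integral>\<^sup>+t. ennreal (f t + f t) * indicator {x<..1} t \<partial>lborel)"
          unfolding J'_def
        proof (rule ind_int_le)
          fix t assume t: "t \<in> {x<..1}"
          then have "- q t \<le> 2 * c" using False qmono[of x t] x by auto
          then have "K t * (- q t) \<le> K t * (2 * c)" using Knn by (intro mult_left_mono) auto
          then show "D t \<le> f t + f t" using fK Dq2 by (simp add: algebra_simps)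
        qed
        also have "\<dots> = A" unfolding A_def by (rule I2) simp
        finally show ?thesis .
      qed
      have "1 \<le> A + J' {0..x}" using J1 Jsp JA by (metis add_left_mono add.commute)
      then have le2: "A + B \<le> A + J' {0..x}" using AB1 by (rule order_trans[rotated])
      have "A \<noteq> \<infinity>"
      proof
        assume "A = \<infinity>" then have "A + B = \<infinity>" by simp
        with AB1 show False by (simp add: top_unique)
      qed
      with le2 have "B \<le> J' {0..x}" by (simp add: ennreal_add_left_cancel_le)
      then show ?thesis unfolding B_def .
    qed
    also have "\<dots> = ennreal (t_bound n x)" using FTC2 x by simp
    finally have "ennreal (measure M {\<omega> \<in> space M. \<bar>X \<omega>\<bar> \<le> x}) \<le> ennreal (t_bound n x)"
      by (simp add: P.emeasure_eq_measure)
    then show "measure M {\<omega> \<in> space M. \<bar>X \<omega>\<bar> \<le> x} \<le> t_bound n x"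
      using gnn[of x] x by (simp add: ennreal_le_iff)
  qed
  have part3: "mono_on {0<..<1} (t_bound n)"
  proof (rule mono_onI)
    fix r s :: real assume rs: "r \<in> {0<..<1}" "s \<in> {0<..<1}" "r \<le> s"
    show "t_bound n r \<le> t_bound n s"
    proof (rule DERIV_nonneg_imp_nondecreasing[OF rs(3)])
      fix t assume "r \<le> t" "t \<le> s"
      then have "0 \<le> t" "t \<le> 1" using rs by auto
      then have "D t \<ge> 0" using Dq2 Knn q1' by (metis mult_nonneg_nonneg neg_0_le_iff_le)
      then show "\<exists>y. DERIV (t_bound n) t :> y \<and> y \<ge> 0" using dg by blast
    qed
  qed
  have part4: "antimono_on {1<..} (t_bound n)"
  proof (rule monotone_onI)
    fix r s :: real assume rs: "r \<in> {1<..}" "s \<in> {1<..}" "r \<le> s"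
    show "t_bound n s \<le> t_bound n r"
    proof (rule DERIV_nonpos_imp_nonincreasing[OF rs(3)])
      fix t assume "r \<le> t" "t \<le> s"
      then have "1 \<le> t" using rs by auto
      then have "- D t \<ge> 0" using Dq Knn q1 by (metis mult_nonneg_nonneg)
      then show "\<exists>y. DERIV (t_bound n) t :> y \<and> y \<le> 0" using dg by (metis neg_0_le_iff_le)
    qed
  qed
  show ?thesis using part1 part2 part3 part4 by blast
qed

end
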